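(* For every $d \in \{2,3,4,5,8,11,12,16,24,40\}$, the sequence $\left(\left\lfloor n^{10}/d \right\rfloor\right)_{n \ge 1}$ is eventually prime-free.
   Context: A sequence $(a_n)_{n\ge 1}$ of positive integers is called eventually prime-free if there exists an index $n_0$ such that $a_n$ is composite for all $n \ge n_0$. (Here, as in the paper, this is understood as: only finitely many terms $a_n$ are prime.) *)

theory Defs
  imports "HOL-Computational_Algebra.Primes"
begin

definition eventually_prime_free :: "(nat \<Rightarrow> nat) \<Rightarrow> bool" where
  "eventually_prime_free a \<longleftrightarrow> finite {n. n \<ge> 1 \<and> prime (a n)}"

end

theory Submission
  imports Defs
begin

lemma key_np:
  fixes d q A B :: nat
  assumes "d * q = A * B" "A > d" "B > d"
  shows "\<not> prime q"
proof
  assume p: "prime q"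
  have "q dvd A * B" using assms(1) by (metis dvd_triv_right)
  then have "q dvd A \<or> q dvd B" using p prime_dvd_mult_iff by blast
  then show False
  proof
    assume "q dvd A"
    then obtain t where t: "A = q * t" by blast
    have "q > 0" using p prime_gt_0_nat by blast
    then have "d = t * B" using assms(1) t by (simp add: mult.assoc)
    moreover have "t > 0" using t assms(2) by (cases t) auto
    ultimately have "d \<ge> B" by simp
    then show False using assms(3) by simp
  next
    assume "q dvd B"
    then obtain t where t: "B = q * t" by blast
    have "q > 0" using p prime_gt_0_nat by blast
    then have "d = t * A" using assms(1) t by (simp add: mult.assoc mult.commute mult.left_commute)
    moreover have "t > 0" using t assms(3) by (cases t) auto
    ultimately have "d \<ge> A" by simp
    then show False using assms(2) by simp
  qed
qed

lemma nat_sqdiff: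
  fixes a s :: nat
  assumes "s \<le> a"
  shows "a^2 - s^2 = (a - s) * (a + s)"
proof -
  obtain k where "a = s + k" using assms le_Suc_ex by blast
  then show ?thesis by (simp add: power2_eq_square algebra_simps)
qed

lemma sq_case:
  fixes n d s :: nat
  assumes "n^10 mod d = s^2" "s \<le> 5" "d \<le> 40" "0 < d" "n \<ge> 3"
  shows "\<not> prime (n^10 div d)"
proof -
  have "(3::nat)^5 \<le> n^5" by (rule power_mono[OF assms(5)]) simp
  then have big: "n^5 \<ge> 243" by simp
  have e: "n^10 = (n^5)^2" by (simp add: power_mult[symmetric])
  have "d * (n^10 div d) = n^10 - s^2" using assms(1)
    by (metis minus_mod_eq_mult_div)
  also have "\<dots> = (n^5 - s) * (n^5 + s)" unfolding e
    using nat_sqdiff[of s "n^5"] big assms(2) by linarith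
  finally show ?thesis
    using key_np[of d "n^10 div d" "n^5 - s" "n^5 + s"] big assms by linarith
qed

lemma res2:
  fixes n :: nat
  shows "n^10 mod 2 \<in> {0,1,4,9,16}"
proof -
  have eq: "n^10 mod 2 = (n mod 2)^10 mod 2" by (simp add: power_mod)
  have ks: "\<And>k::nat. k < 2 \<Longrightarrow> k \<in> {0,1}" by simp presburger
  have m: "n mod 2 \<in> {0,1}" by (rule ks) simp
  have t: "\<forall>k::nat \<in> {0,1}. k^10 mod 2 \<in> {0,1,4,9,16}" by simp
  show ?thesis unfolding eq by (rule bspec[OF t m])
qed

lemma res3:
  fixes n :: nat
  shows "n^10 mod 3 \<in> {0,1,4,9,16}"
proof -
  have eq: "n^10 mod 3 = (n mod 3)^10 mod 3" by (simp add: power_mod)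
  have ks: "\<And>k::nat. k < 3 \<Longrightarrow> k \<in> {0,1,2}" by simp presburger
  have m: "n mod 3 \<in> {0,1,2}" by (rule ks) simp
  have t: "\<forall>k::nat \<in> {0,1,2}. k^10 mod 3 \<in> {0,1,4,9,16}" by simp
  show ?thesis unfolding eq by (rule bspec[OF t m])
qed

lemma res4:
  fixes n :: nat
  shows "n^10 mod 4 \<in> {0,1,4,9,16}"
proof -
  have eq: "n^10 mod 4 = (n mod 4)^10 mod 4" by (simp add: power_mod)
  have ks: "\<And>k::nat. k < 4 \<Longrightarrow> k \<in> {0,1,2,3}" by simp presburger
  have m: "n mod 4 \<in> {0,1,2,3}" by (rule ks) simp
  have t: "\<forall>k::nat \<in> {0,1,2,3}. k^10 mod 4 \<in> {0,1,4,9,16}" by simp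
  show ?thesis unfolding eq by (rule bspec[OF t m])
qed

lemma res5:
  fixes n :: nat
  shows "n^10 mod 5 \<in> {0,1,4,9,16}"
proof -
  have eq: "n^10 mod 5 = (n mod 5)^10 mod 5" by (simp add: power_mod)
  have ks: "\<And>k::nat. k < 5 \<Longrightarrow> k \<in> {0,1,2,3,4}" by simp presburger
  have m: "n mod 5 \<in> {0,1,2,3,4}" by (rule ks) simp
  have t: "\<forall>k::nat \<in> {0,1,2,3,4}. k^10 mod 5 \<in> {0,1,4,9,16}" by simp
  show ?thesis unfolding eq by (rule bspec[OF t m])
qed

lemma res8:
  fixes n :: nat
  shows "n^10 mod 8 \<in> {0,1,4,9,16}"
proof -
  have eq: "n^10 mod 8 = (n mod 8)^10 mod 8" by (simp add: power_mod)
  have ks: "\<And>k::nat. k < 8 \<Longrightarrow> k \<in> {0,1,2,3,4,5,6,7}" by simp presburger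
  have m: "n mod 8 \<in> {0,1,2,3,4,5,6,7}" by (rule ks) simp
  have t: "\<forall>k::nat \<in> {0,1,2,3,4,5,6,7}. k^10 mod 8 \<in> {0,1,4,9,16}" by simp
  show ?thesis unfolding eq by (rule bspec[OF t m])
qed

lemma res11:
  fixes n :: nat
  shows "n^10 mod 11 \<in> {0,1,4,9,16}"
proof -
  have eq: "n^10 mod 11 = (n mod 11)^10 mod 11" by (simp add: power_mod)
  have ks: "\<And>k::nat. k < 11 \<Longrightarrow> k \<in> {0,1,2,3,4,5,6,7,8,9,10}" by simp presburger
  have m: "n mod 11 \<in> {0,1,2,3,4,5,6,7,8,9,10}" by (rule ks) simp
  have t: "\<forall>k::nat \<in> {0,1,2,3,4,5,6,7,8,9,10}. k^10 mod 11 \<in> {0,1,4,9,16}" by simp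
  show ?thesis unfolding eq by (rule bspec[OF t m])
qed

lemma res12:
  fixes n :: nat
  shows "n^10 mod 12 \<in> {0,1,4,9,16}"
proof -
  have eq: "n^10 mod 12 = (n mod 12)^10 mod 12" by (simp add: power_mod)
  have ks: "\<And>k::nat. k < 12 \<Longrightarrow> k \<in> {0,1,2,3,4,5,6,7,8,9,10,11}" by simp presburger
  have m: "n mod 12 \<in> {0,1,2,3,4,5,6,7,8,9,10,11}" by (rule ks) simp
  have t: "\<forall>k::nat \<in> {0,1,2,3,4,5,6,7,8,9,10,11}. k^10 mod 12 \<in> {0,1,4,9,16}" by simp
  show ?thesis unfolding eq by (rule bspec[OF t m])
qed

lemma res16:
  fixes n :: nat
  shows "n^10 mod 16 \<in> {0,1,4,9,16}"
proof -
  have eq: "n^10 mod 16 = (n mod 16)^10 mod 16" by (simp add: power_mod)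
  have ks: "\<And>k::nat. k < 16 \<Longrightarrow> k \<in> {0,1,2,3,4,5,6,7,8,9,10,11,12,13,14,15}" by simp presburger
  have m: "n mod 16 \<in> {0,1,2,3,4,5,6,7,8,9,10,11,12,13,14,15}" by (rule ks) simp
  have t: "\<forall>k::nat \<in> {0,1,2,3,4,5,6,7,8,9,10,11,12,13,14,15}. k^10 mod 16 \<in> {0,1,4,9,16}" by simp
  show ?thesis unfolding eq by (rule bspec[OF t m])
qed

lemma res24:
  fixes n :: nat
  shows "n^10 mod 24 \<in> {0,1,4,9,16}"
proof -
  have eq: "n^10 mod 24 = (n mod 24)^10 mod 24" by (simp add: power_mod)
  have ks: "\<And>k::nat. k < 24 \<Longrightarrow> k \<in> {0,1,2,3,4,5,6,7,8,9,10,11,12,13,14,15,16,17,18,19,20,21,22,23}" by simp presburger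
  have m: "n mod 24 \<in> {0,1,2,3,4,5,6,7,8,9,10,11,12,13,14,15,16,17,18,19,20,21,22,23}" by (rule ks) simp
  have t: "\<forall>k::nat \<in> {0,1,2,3,4,5,6,7,8,9,10,11,12,13,14,15,16,17,18,19,20,21,22,23}. k^10 mod 24 \<in> {0,1,4,9,16}" by simp
  show ?thesis unfolding eq by (rule bspec[OF t m])
qed

lemma res40:
  fixes n :: nat
  shows "n^10 mod 40 \<in> {0,1,9,16,24,25}"
proof -
  have eq: "n^10 mod 40 = (n mod 40)^10 mod 40" by (simp add: power_mod)
  have ks: "\<And>k::nat. k < 40 \<Longrightarrow> k \<in> {0,1,2,3,4,5,6,7,8,9,10,11,12,13,14,15,16,17,18,19,20,21,22,23,24,25,26,27,28,29,30,31,32,33,34,35,36,37,38,39}" by simp presburger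
  have m: "n mod 40 \<in> {0,1,2,3,4,5,6,7,8,9,10,11,12,13,14,15,16,17,18,19,20,21,22,23,24,25,26,27,28,29,30,31,32,33,34,35,36,37,38,39}" by (rule ks) simp
  have t: "\<forall>k::nat \<in> {0,1,2,3,4,5,6,7,8,9,10,11,12,13,14,15,16,17,18,19,20,21,22,23,24,25,26,27,28,29,30,31,32,33,34,35,36,37,38,39}. k^10 mod 40 \<in> {0,1,9,16,24,25}" by simp
  show ?thesis unfolding eq by (rule bspec[OF t m])
qed

lemma res25:
  fixes n :: nat
  shows "n^10 mod 25 \<in> {0,1,24}"
proof -
  have eq: "n^10 mod 25 = (n mod 25)^10 mod 25" by (simp add: power_mod)
  have ks: "\<And>k::nat. k < 25 \<Longrightarrow> k \<in> {0,1,2,3,4,5,6,7,8,9,10,11,12,13,14,15,16,17,18,19,20,21,22,23,24}" by simp presburger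
  have m: "n mod 25 \<in> {0,1,2,3,4,5,6,7,8,9,10,11,12,13,14,15,16,17,18,19,20,21,22,23,24}" by (rule ks) simp
  have t: "\<forall>k::nat \<in> {0,1,2,3,4,5,6,7,8,9,10,11,12,13,14,15,16,17,18,19,20,21,22,23,24}. k^10 mod 25 \<in> {0,1,24}" by simp
  show ?thesis unfolding eq by (rule bspec[OF t m])
qed

lemma sq_ex:
  fixes x :: nat
  assumes "x \<in> {0,1,4,9,16,25}"
  shows "\<exists>s::nat. x = s^2 \<and> s \<le> 5"
  using assms
  apply (elim insertE emptyE)
       apply (rule exI[of _ 0], simp)
      apply (rule exI[of _ 1], simp)
     apply (rule exI[of _ 2], simp)
    apply (rule exI[of _ 3], simp)
   apply (rule exI[of _ 4], simp)
  apply (rule exI[of _ 5], simp)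
  done

lemma memb_sub: "(x::nat) \<in> {0,1,4,9,16} \<Longrightarrow> x \<in> {0,1,4,9,16,25}"
  by auto

lemma small_case:
  fixes n d :: nat
  assumes "n^10 mod d \<in> {0,1,4,9,16}" "0 < d" "d \<le> 40" "n \<ge> 3"
  shows "\<not> prime (n^10 div d)"
proof -
  have "n^10 mod d \<in> {0,1,4,9,16,25}" using assms(1) by (rule memb_sub)
  from sq_ex[OF this] obtain s where s: "n^10 mod d = s^2" "s \<le> 5" by blast
  show ?thesis by (rule sq_case[OF s assms(3) assms(2) assms(4)])
qed

lemma l1: fixes N :: nat assumes a: "N mod 40 = 24" and b: "N mod 25 \<in> {0,1,24}"
  shows "5 dvd N div 40"
proof -
  have "N mod 40 mod 5 = N mod 5" by (rule mod_mod_cancel) simp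
  then have c: "N mod 5 = 4" using a by simp
  have "N mod 25 mod 5 = N mod 5" by (rule mod_mod_cancel) simp
  then have b2: "N mod 25 = 24" using b c by auto
  define q where "q = N div 40"
  have N1: "N = 40 * q + 24" using a q_def by (metis div_mult_mod_eq mult.commute)
  have N2: "N = 25 * (N div 25) + 24" using b2 by (metis div_mult_mod_eq mult.commute)
  have "40 * q = 25 * (N div 25)" using N1 N2 by linarith
  then have "5 * (8 * q) = 5 * (5 * (N div 25))" by simp
  then have "8 * q = 5 * (N div 25)" by simp
  then have "5 dvd 8 * q" by simp
  moreover have "prime (5::nat)" by simp
  ultimately have "5 dvd (8::nat) \<or> 5 dvd q" using prime_dvd_mult_iff by blast
  then show ?thesis unfolding q_def by simp
qed

lemma memb40: "(x::nat) \<in> {0,1,9,16,24,25} \<Longrightarrow> x \<noteq> 24 \<Longrightarrow> x \<in> {0,1,4,9,16,25}"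
  by auto

lemma case40:
  fixes n :: nat
  assumes "n \<ge> 3"
  shows "\<not> prime (n^10 div 40)"
proof (cases "n^10 mod 40 = 24")
  case False
  have "n^10 mod 40 \<in> {0,1,9,16,24,25}" by (rule res40)
  then have "n^10 mod 40 \<in> {0,1,4,9,16,25}" using False by (rule memb40)
  from sq_ex[OF this] obtain s where s: "n^10 mod 40 = s^2" "s \<le> 5" by blast
  show ?thesis by (rule sq_case[OF s _ _ assms]) simp_all
next
  case True
  define N where "N = n^10"
  have a: "N mod 40 = 24" using True N_def by simp
  have "N mod 25 \<in> {0,1,24}" unfolding N_def by (rule res25)
  then have dv: "5 dvd N div 40" by (rule l1[OF a])
  have "(3::nat)^10 \<le> n^10" by (rule power_mono[OF assms]) simp
  then have "N \<ge> 59049" unfolding N_def by simp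
  then have gt: "N div 40 > 5" by simp
  show ?thesis
  proof
    assume "prime (n^10 div 40)"
    then have pr: "prime (N div 40)" unfolding N_def .
    have "(5::nat) = 1 \<or> 5 = N div 40" using pr dv unfolding prime_nat_iff by blast
    then have "N div 40 = 5" by simp
    then show False using gt by simp
  qed
qed

theorem theorem7:
  fixes d :: nat
  assumes "d \<in> {2,3,4,5,8,11,12,16,24,40}"
  shows "eventually_prime_free (\<lambda>n. n ^ 10 div d)"
  unfolding eventually_prime_free_def
proof (rule finite_subset[of _ "{..<3}"])
  show "finite {..<(3::nat)}" by simp
  show "{n. n \<ge> 1 \<and> prime (n ^ 10 div d)} \<subseteq> {..<3}"
  proof
    fix n assume "n \<in> {n. n \<ge> 1 \<and> prime (n ^ 10 div d)}"
    then have p: "prime (n ^ 10 div d)" by simp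
    show "n \<in> {..<3}"
    proof (rule ccontr)
      assume "n \<notin> {..<3}"
      then have n3: "n \<ge> 3" by simp
      show False
      proof (cases "d = 40")
        case True
        then show False using case40[OF n3] p by simp
      next
        case False
        then have dd: "d \<in> {2,3,4,5,8,11,12,16,24}" using assms by auto
        have "n^10 mod d \<in> {0,1,4,9,16}" using dd
          apply (elim insertE emptyE)
                  apply (simp only: res2)
                 apply (simp only: res3)
                apply (simp only: res4)
               apply (simp only: res5)
              apply (simp only: res8)
             apply (simp only: res11)
            apply (simp only: res12)
           apply (simp only: res16)
          apply (simp only: res24)
          done
        moreover have "0 < d" using assms by auto
        moreover have "d \<le> 40" using assms by auto
        ultimately have "\<not> prime (n^10 div d)" by (rule small_case[OF _ _ _ n3])
        then show False using p by simp
      qed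
    qed
  qed
qed

end
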